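(* Let $t\in[n]$. If $S\subseteq N$ is $t$-switchable, then $P^{\langle t\rangle}_S$ contains $\mathcal{I}^{\langle t\rangle}$.
   Context: Fix positive integers $n, r_1,\dots,r_n$, let $N=[r_1]\times\cdots\times[r_n]$, and let $R$ be the polynomial ring over a field in the variables $x_a$, $a\in N$. For $a,b\in N$ and $i\in[n]$, ${\rm s}(i,a,b)\in N$ has $i$-th component $b_i$ and other components equal to those of $a$. Let $d(a,b)=\#\{j: a_j\neq b_j\}$ and $f_{i,a,b}=x_ax_b-x_{{\rm s}(i,a,b)}x_{{\rm s}(i,b,a)}$. Let $\mathcal{I}^{\langle t\rangle}=(f_{i,a,b}: a,b\in N,\ d(a,b)=2,\ i\in[t])$. A subset $S\subseteq N$ is $t$-switchable if for all $a,b\in S$ with $d(a,b)=2$ and all $i\in[t]$, ${\rm s}(i,a,b)\in S$. Elements $a,b\in S$ are connected in $S$ if there are $a_0=a,\dots,a_k=b$ in $S$ with $d(a_{j-1},a_j)\le 1$ for all $j$. For $t$-switchable $S$: $\tilde{\mathcal{I}}^{\langle t\rangle}_S=(f_{i,a,b}: i\in[t],\ a,b \text{ connected in } S)$, $\mathrm{Var}^{\langle t\rangle}_S=(x_a: a\notin S)$, $P^{\langle t\rangle}_S=\mathrm{Var}^{\langle t\rangle}_S+\tilde{\mathcal{I}}^{\langle t\rangle}_S$. *)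

theory Defs
  imports Main "HOL-Library.Poly_Mapping"
begin

text \<open>Points of N = [r_1] x ... x [r_n] are lists a of length n; the i-th
  component (i in {1..n}) is a ! (i - 1).\<close>

definition cube :: "nat \<Rightarrow> (nat \<Rightarrow> nat) \<Rightarrow> nat list set" where
  "cube n r = {a. length a = n \<and> (\<forall>i\<in>{1..n}. a ! (i - 1) \<in> {1..r i})}"

definition sw :: "nat \<Rightarrow> nat list \<Rightarrow> nat list \<Rightarrow> nat list" where
  "sw i a b = a[i - 1 := b ! (i - 1)]"

definition dst :: "nat list \<Rightarrow> nat list \<Rightarrow> nat" where
  "dst a b = card {j. j < length a \<and> a ! j \<noteq> b ! j}"

text \<open>Multivariate polynomials over 'k in the variables x_a (a a nat list).\<close>
type_synonym 'k mpoly = "(nat list \<Rightarrow>\<^sub>0 nat) \<Rightarrow>\<^sub>0 'k"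

definition var :: "nat list \<Rightarrow> 'k::field mpoly" where
  "var a = Poly_Mapping.single (Poly_Mapping.single a 1) 1"

text \<open>The polynomial ring R = k[x_a : a in N], as the set of polynomials
  involving only the variables indexed by N.\<close>
definition polyring :: "nat list set \<Rightarrow> 'k::field mpoly set" where
  "polyring N = {p. \<forall>m\<in>Poly_Mapping.keys p. Poly_Mapping.keys m \<subseteq> N}"

definition ideal_gen :: "'k::field mpoly set \<Rightarrow> 'k mpoly set \<Rightarrow> 'k mpoly set" where
  "ideal_gen R G = {x. \<exists>F c. finite F \<and> F \<subseteq> G \<and> (\<forall>g\<in>F. c g \<in> R) \<and> x = (\<Sum>g\<in>F. c g * g)}"

definition fpol :: "nat \<Rightarrow> nat list \<Rightarrow> nat list \<Rightarrow> 'k::field mpoly" where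
  "fpol i a b = var a * var b - var (sw i a b) * var (sw i b a)"

definition I_t :: "nat \<Rightarrow> (nat \<Rightarrow> nat) \<Rightarrow> nat \<Rightarrow> 'k::field mpoly set" where
  "I_t n r t = ideal_gen (polyring (cube n r))
     {fpol i a b | i a b. a \<in> cube n r \<and> b \<in> cube n r \<and> dst a b = 2 \<and> i \<in> {1..t}}"

definition switchable :: "nat \<Rightarrow> nat list set \<Rightarrow> bool" where
  "switchable t S \<longleftrightarrow> (\<forall>a\<in>S. \<forall>b\<in>S. dst a b = 2 \<longrightarrow> (\<forall>i\<in>{1..t}. sw i a b \<in> S))"

definition connected_in :: "nat list set \<Rightarrow> nat list \<Rightarrow> nat list \<Rightarrow> bool" where
  "connected_in S a b \<longleftrightarrow> a \<in> S \<and> b \<in> S \<and>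
     (\<lambda>x y. x \<in> S \<and> y \<in> S \<and> dst x y \<le> 1)\<^sup>*\<^sup>* a b"

definition Itilde :: "nat \<Rightarrow> (nat \<Rightarrow> nat) \<Rightarrow> nat \<Rightarrow> nat list set \<Rightarrow> 'k::field mpoly set" where
  "Itilde n r t S = ideal_gen (polyring (cube n r))
     {fpol i a b | i a b. i \<in> {1..t} \<and> connected_in S a b}"

definition VarS :: "nat \<Rightarrow> (nat \<Rightarrow> nat) \<Rightarrow> nat list set \<Rightarrow> 'k::field mpoly set" where
  "VarS n r S = ideal_gen (polyring (cube n r)) {var a | a. a \<in> cube n r \<and> a \<notin> S}"

definition P_S :: "nat \<Rightarrow> (nat \<Rightarrow> nat) \<Rightarrow> nat \<Rightarrow> nat list set \<Rightarrow> 'k::field mpoly set" where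
  "P_S n r t S = {x + y | x y. x \<in> VarS n r S \<and> y \<in> Itilde n r t S}"

end

theory Submission
  imports Defs
begin

lemma polyring_add:
  fixes p q :: "'k::field mpoly"
  assumes p: "p \<in> polyring N" and q: "q \<in> polyring N" shows "p + q \<in> polyring N"
  unfolding polyring_def
proof (intro CollectI ballI)
  fix m :: "nat list \<Rightarrow>\<^sub>0 nat"
  assume "m \<in> Poly_Mapping.keys (p + q)"
  then have "m \<in> Poly_Mapping.keys p \<or> m \<in> Poly_Mapping.keys q" using keys_add[of p q] by auto
  then show "Poly_Mapping.keys m \<subseteq> N" using p q unfolding polyring_def by auto
qed

lemma polyring_mult:
  fixes p q :: "'k::field mpoly"
  assumes p: "p \<in> polyring N" and q: "q \<in> polyring N" shows "p * q \<in> polyring N"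
  unfolding polyring_def
proof (intro CollectI ballI subsetI)
  fix m :: "nat list \<Rightarrow>\<^sub>0 nat" and x
  assume m: "m \<in> Poly_Mapping.keys (p * q)" and x: "x \<in> Poly_Mapping.keys m"
  from keys_mult[of p q] m obtain a b where "m = a + b" "a \<in> Poly_Mapping.keys p" "b \<in> Poly_Mapping.keys q" by blast
  then show "x \<in> N" using keys_add[of a b] p q x unfolding polyring_def by blast
qed

lemma polyring_one: "1 \<in> polyring N"
  unfolding polyring_def by simp

lemma polyring_zero: "0 \<in> polyring N"
  unfolding polyring_def by simp

lemma polyring_uminus: "p \<in> polyring N \<Longrightarrow> - p \<in> polyring N"
  unfolding polyring_def by (simp add: in_keys_iff)

lemma ideal_gen_zero: "0 \<in> ideal_gen (polyring N) G"
  unfolding ideal_gen_def by (rule CollectI, rule exI[of _ "{}"]) auto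

lemma ideal_gen_base: "g \<in> G \<Longrightarrow> g \<in> ideal_gen (polyring N) G"
  unfolding ideal_gen_def
  by (rule CollectI, rule exI[of _ "{g}"], rule exI[of _ "\<lambda>_. 1"]) (auto simp: polyring_one)

lemma ideal_gen_add:
  assumes "x \<in> ideal_gen (polyring N) G" "y \<in> ideal_gen (polyring N) G"
  shows "x + y \<in> ideal_gen (polyring N) G"
proof -
  obtain F1 c1 where 1: "finite F1" "F1 \<subseteq> G" "\<forall>g\<in>F1. c1 g \<in> polyring N" "x = (\<Sum>g\<in>F1. c1 g * g)"
    using assms(1) unfolding ideal_gen_def by blast
  obtain F2 c2 where 2: "finite F2" "F2 \<subseteq> G" "\<forall>g\<in>F2. c2 g \<in> polyring N" "y = (\<Sum>g\<in>F2. c2 g * g)"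
    using assms(2) unfolding ideal_gen_def by blast
  define c where "c g = (if g \<in> F1 then c1 g else 0) + (if g \<in> F2 then c2 g else 0)" for g
  have "(\<Sum>g\<in>F1 \<union> F2. (if g \<in> F1 then c1 g else 0) * g) = x"
    unfolding 1(4) using 1 2 by (intro sum.mono_neutral_cong_right) auto
  moreover have "(\<Sum>g\<in>F1 \<union> F2. (if g \<in> F2 then c2 g else 0) * g) = y"
    unfolding 2(4) using 1 2 by (intro sum.mono_neutral_cong_right) auto
  ultimately have "x + y = (\<Sum>g\<in>F1 \<union> F2. c g * g)"
    by (auto simp add: c_def sum.distrib distrib_right)
  moreover have "\<forall>g\<in>F1 \<union> F2. c g \<in> polyring N"
    using 1 2 by (auto simp: c_def intro!: polyring_add polyring_zero)
  ultimately show ?thesis using 1 2 unfolding ideal_gen_def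
    by (intro CollectI exI[of _ "F1 \<union> F2"] exI[of _ c]) auto
qed

lemma ideal_gen_mult:
  assumes "x \<in> ideal_gen (polyring N) G" "p \<in> polyring N"
  shows "p * x \<in> ideal_gen (polyring N) G"
proof -
  obtain F c where 1: "finite F" "F \<subseteq> G" "\<forall>g\<in>F. c g \<in> polyring N" "x = (\<Sum>g\<in>F. c g * g)"
    using assms(1) unfolding ideal_gen_def by blast
  have "p * x = (\<Sum>g\<in>F. (p * c g) * g)"
    using 1 by (simp add: sum_distrib_left mult.assoc)
  then show ?thesis using 1 assms(2) unfolding ideal_gen_def
    by (intro CollectI exI[of _ F] exI[of _ "\<lambda>g. p * c g"]) (auto intro: polyring_mult)
qed

lemma ideal_gen_diff:
  assumes "x \<in> ideal_gen (polyring N) G" "y \<in> ideal_gen (polyring N) G"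
  shows "x - y \<in> ideal_gen (polyring N) G"
proof -
  have "(- 1) * y \<in> ideal_gen (polyring N) G"
    by (rule ideal_gen_mult[OF assms(2) polyring_uminus[OF polyring_one]])
  from ideal_gen_add[OF assms(1) this] show ?thesis by simp
qed

lemma PS_add: assumes "x \<in> P_S n r t S" "y \<in> P_S n r t S" shows "x + y \<in> P_S n r t S"
proof -
  obtain a b where ab: "x = a + b" "a \<in> VarS n r S" "b \<in> Itilde n r t S" using assms(1) unfolding P_S_def by blast
  obtain c d where cd: "y = c + d" "c \<in> VarS n r S" "d \<in> Itilde n r t S" using assms(2) unfolding P_S_def by blast
  have "a + c \<in> VarS n r S" using ab cd using ideal_gen_add unfolding VarS_def by blast
  moreover have "b + d \<in> Itilde n r t S" using ab cd using ideal_gen_add unfolding Itilde_def by blast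
  moreover have "x + y = (a + c) + (b + d)" using ab cd by (simp add: algebra_simps)
  ultimately show ?thesis unfolding P_S_def by blast
qed

lemma PS_mult: assumes "x \<in> P_S n r t S" "p \<in> polyring (cube n r)" shows "p * x \<in> P_S n r t S"
proof -
  obtain a b where ab: "x = a + b" "a \<in> VarS n r S" "b \<in> Itilde n r t S" using assms(1) unfolding P_S_def by blast
  have "p * a \<in> VarS n r S" using ab assms(2) using ideal_gen_mult unfolding VarS_def by blast
  moreover have "p * b \<in> Itilde n r t S" using ab assms(2) using ideal_gen_mult unfolding Itilde_def by blast
  moreover have "p * x = p * a + p * b" using ab by (simp add: algebra_simps)
  ultimately show ?thesis unfolding P_S_def by blast
qed

lemma PS_V: "x \<in> VarS n r S \<Longrightarrow> x \<in> P_S n r t S"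
  unfolding P_S_def Itilde_def using ideal_gen_zero by force

lemma PS_T: "x \<in> Itilde n r t S \<Longrightarrow> x \<in> P_S n r t S"
  unfolding P_S_def VarS_def using ideal_gen_zero by force

lemma PS_sum:
  assumes "finite F" "\<forall>g\<in>F. c g \<in> polyring (cube n r)" "\<forall>g\<in>F. g \<in> P_S n r t S"
  shows "(\<Sum>g\<in>F. c g * g) \<in> P_S n r t S"
  using assms
proof (induction F rule: finite_induct)
  case empty
  have "0 \<in> VarS n r S" unfolding VarS_def by (rule ideal_gen_zero)
  then show ?case by simp (rule PS_V)
next
  case (insert x F)
  then show ?case by (simp add: PS_add PS_mult)
qed

lemma cube_len: "a \<in> cube n r \<Longrightarrow> length a = n"
  unfolding cube_def by simp

lemma sw_cube:
  assumes "a \<in> cube n r" "b \<in> cube n r" shows "sw i a b \<in> cube n r"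
proof -
  have la: "length a = n" and lb: "length b = n" using assms unfolding cube_def by auto
  have "a[i - 1 := b ! (i - 1)] ! (j - 1) \<in> {1..r j}" if j: "j \<in> {1..n}" for j
  proof (cases "j - 1 = i - 1")
    case True
    then have "a[i - 1 := b ! (i - 1)] ! (j - 1) = b ! (j - 1)" using j la by (auto simp: nth_list_update)
    then show ?thesis using assms(2) j unfolding cube_def by auto
  next
    case False
    then have "a[i - 1 := b ! (i - 1)] ! (j - 1) = a ! (j - 1)" by simp
    then show ?thesis using assms(1) j unfolding cube_def by auto
  qed
  then show ?thesis using la unfolding cube_def sw_def by auto
qed

lemma var_poly: "a \<in> N \<Longrightarrow> (var a :: 'k::field mpoly) \<in> polyring N"
  unfolding var_def polyring_def by simp

lemma dst_sym: "length a = length b \<Longrightarrow> dst a b = dst b a"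
  unfolding dst_def by metis

lemma gen_in_PS:
  fixes n t :: nat and r :: "nat \<Rightarrow> nat" and S :: "nat list set"
  assumes ac: "a \<in> cube n r" and bc: "b \<in> cube n r" and d2: "dst a b = 2"
    and i: "i \<in> {1..t}" and tn: "t \<le> n"
    and Sc: "S \<subseteq> cube n r" and sw: "switchable t S"
  shows "(fpol i a b :: 'k::field mpoly) \<in> P_S n r t S"
proof -
  define k where "k = i - 1"
  have kn: "k < n" using i tn unfolding k_def by auto
  have la: "length a = n" and lb: "length b = n" using ac bc cube_len by auto
  have z: "(0::'k mpoly) \<in> P_S n r t S"
    by (rule PS_V) (unfold VarS_def, rule ideal_gen_zero)
  show ?thesis
  proof (cases "a ! k = b ! k")
    case True
    have "sw i a b = a" "sw i b a = b" unfolding sw_def k_def[symmetric] using True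
      by (metis list_update_id)+
    then have "(fpol i a b :: 'k mpoly) = 0" unfolding fpol_def by (simp add: mult.commute)
    then show ?thesis using z by simp
  next
    case False
    define s where "s = sw i a b"
    define s' where "s' = sw i b a"
    have s_def2: "s = a[k := b ! k]" and s'_def2: "s' = b[k := a ! k]"
      unfolding s_def s'_def sw_def k_def by auto
    define D where "D = {j. j < n \<and> a ! j \<noteq> b ! j}"
    have fD: "finite D" unfolding D_def by auto
    have cD: "card D = 2" using d2 la unfolding dst_def D_def by simp
    have kD: "k \<in> D" using False kn unfolding D_def by auto
    have ls: "length s = n" "length s' = n" using la lb s_def2 s'_def2 by auto
    have sj: "\<And>j. j < n \<Longrightarrow> s ! j = (if j = k then b ! j else a ! j)"
      using s_def2 la by simp
    have s'j: "\<And>j. j < n \<Longrightarrow> s' ! j = (if j = k then a ! j else b ! j)"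
      using s'_def2 lb by simp
    have d_as: "dst a s \<le> 1"
    proof -
      have "{j. j < length a \<and> a ! j \<noteq> s ! j} \<subseteq> {k}" using s_def2 by clarsimp (metis nth_list_update_neq)
      then have "card {j. j < length a \<and> a ! j \<noteq> s ! j} \<le> card {k}" by (intro card_mono) auto
      then show ?thesis unfolding dst_def by simp
    qed
    have d_sb: "dst s b \<le> 1"
    proof -
      have "{j. j < length s \<and> s ! j \<noteq> b ! j} \<subseteq> D - {k}" using sj ls unfolding D_def
        by (auto split: if_splits)
      then have "card {j. j < length s \<and> s ! j \<noteq> b ! j} \<le> card (D - {k})"
        using fD by (intro card_mono) auto
      also have "\<dots> = 1" using fD kD cD by simp
      finally show ?thesis unfolding dst_def by simp
    qed
    have d_ss: "dst s s' = 2"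
    proof -
      have "{j. j < length s \<and> s ! j \<noteq> s' ! j} = D" using sj s'j ls unfolding D_def
        by (auto split: if_splits)
      then show ?thesis using cD unfolding dst_def by simp
    qed
    have back1: "sw i s s' = a" unfolding sw_def k_def[symmetric] s_def2 s'_def2 using kn la lb
      by simp
    have back2: "sw i s' s = b" unfolding sw_def k_def[symmetric] s_def2 s'_def2 using kn la lb
      by simp
    have sc: "s \<in> cube n r" "s' \<in> cube n r" unfolding s_def s'_def using ac bc sw_cube by auto
    have d_ba: "dst b a = 2" using d2 dst_sym la lb by metis
    have d_ss': "dst s' s = 2" using d_ss dst_sym ls by metis
    show ?thesis
    proof (cases "a \<in> S \<and> b \<in> S")
      case True
      then have sS: "s \<in> S" "s' \<in> S" using sw i d2 d_ba unfolding switchable_def s_def s'_def by auto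
      have "connected_in S a b" unfolding connected_in_def
      proof (intro conjI)
        let ?R = "\<lambda>x y. x \<in> S \<and> y \<in> S \<and> dst x y \<le> 1"
        show "?R\<^sup>*\<^sup>* a b"
          by (rule rtranclp_trans[OF r_into_rtranclp[where x = a and y = s] r_into_rtranclp])
            (use True sS d_as d_sb in auto)
      qed (use True in auto)
      then have "(fpol i a b :: 'k mpoly) \<in> Itilde n r t S" unfolding Itilde_def
        using i by (intro ideal_gen_base) blast
      then show ?thesis by (rule PS_T)
    next
      case False
      have "s \<notin> S \<or> s' \<notin> S"
      proof (rule ccontr)
        assume "\<not> (s \<notin> S \<or> s' \<notin> S)"
        then have "s \<in> S" "s' \<in> S" by auto
        then have "sw i s s' \<in> S" "sw i s' s \<in> S" using sw i d_ss d_ss' unfolding switchable_def by auto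
        then show False using False back1 back2 by simp
      qed
      have vb: "\<And>c. c \<in> cube n r \<Longrightarrow> c \<notin> S \<Longrightarrow> (var c :: 'k mpoly) \<in> VarS n r S"
        unfolding VarS_def by (intro ideal_gen_base) blast
      have vp: "\<And>c. c \<in> cube n r \<Longrightarrow> (var c :: 'k mpoly) \<in> polyring (cube n r)"
        by (rule var_poly)
      have m1: "(var a * var b :: 'k mpoly) \<in> VarS n r S"
      proof (cases "a \<in> S")
        case True
        then have "b \<notin> S" using False by auto
        then show ?thesis using ideal_gen_mult[OF vb[OF bc, unfolded VarS_def] vp[OF ac]] unfolding VarS_def
          by (simp add: mult.commute)
      next
        case False
        then show ?thesis using ideal_gen_mult[OF vb[OF ac, unfolded VarS_def] vp[OF bc]] unfolding VarS_def
          by (simp add: mult.commute)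
      qed
      have m2: "(var s * var s' :: 'k mpoly) \<in> VarS n r S"
      proof (cases "s \<in> S")
        case True
        then have "s' \<notin> S" using \<open>s \<notin> S \<or> s' \<notin> S\<close> by auto
        then show ?thesis using ideal_gen_mult[OF vb[OF sc(2), unfolded VarS_def] vp[OF sc(1)]] unfolding VarS_def
          by (simp add: mult.commute)
      next
        case False
        then show ?thesis using ideal_gen_mult[OF vb[OF sc(1), unfolded VarS_def] vp[OF sc(2)]] unfolding VarS_def
          by (simp add: mult.commute)
      qed
      have "(fpol i a b :: 'k mpoly) \<in> VarS n r S"
        using ideal_gen_diff[OF m1[unfolded VarS_def] m2[unfolded VarS_def]]
        unfolding fpol_def VarS_def s_def s'_def by simp
      then show ?thesis by (rule PS_V)
    qed
  qed
qed

theorem proposition4p2: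
  fixes n t :: nat and r :: "nat \<Rightarrow> nat" and S :: "nat list set"
  assumes "\<forall>i\<in>{1..n}. 0 < r i"
    and "t \<in> {1..n}"
    and "S \<subseteq> cube n r"
    and "switchable t S"
  shows "(I_t n r t :: 'k::field mpoly set) \<subseteq> P_S n r t S"
proof
  fix x :: "'k mpoly" assume "x \<in> I_t n r t"
  then obtain F c where F: "finite F"
    "F \<subseteq> {fpol i a b | i a b. a \<in> cube n r \<and> b \<in> cube n r \<and> dst a b = 2 \<and> i \<in> {1..t}}"
    "\<forall>g\<in>F. c g \<in> polyring (cube n r)" "x = (\<Sum>g\<in>F. c g * g)"
    unfolding I_t_def ideal_gen_def by blast
  have "\<forall>g\<in>F. g \<in> P_S n r t S"
  proof
    fix g assume "g \<in> F"
    then obtain i a b where "g = fpol i a b" "a \<in> cube n r" "b \<in> cube n r" "dst a b = 2" "i \<in> {1..t}"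
      using F(2) by blast
    moreover have "t \<le> n" using assms(2) by auto
    ultimately show "g \<in> P_S n r t S" using gen_in_PS[OF _ _ _ _ _ assms(3) assms(4)] by blast
  qed
  then show "x \<in> P_S n r t S" using F PS_sum by blast
qed

end
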